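(* Let $f\in\mathcal R^0(\mathbb R^2)$ and write $f=\frac{p}{q}$ on $\mathrm{dom}(f)$ with $p,q\in\mathbb R[x,y]$ coprime, $q\ge 0$ on $\mathbb R^2$ and $q$ nonvanishing on $\mathrm{dom}(f)$. Then $f\in\mathcal R^0_{[1]}(\mathbb R^2)$ if and only if $q$ is locally positive definite at every point $a\in\mathrm{pol}(f)$.
   Context: For $k\in\mathbb N\cup\{\infty\}$ and $n\ge 1$, $\mathcal R^k(\mathbb R^n)$ denotes the ring of $k$-regulous functions: functions $f:\mathbb R^n\to\mathbb R$ of class $C^k$ for which there exist a nonempty Zariski open set $U\subseteq\mathbb R^n$ and polynomials $p,q$ with $q$ nonvanishing on $U$ and $f=p/q$ on $U$. Such an $f$ determines a rational function; $\mathrm{dom}(f)$ is the largest Zariski open set on which this rational function is regular (i.e. of the form $p/q$ with $q$ nonvanishing there), and $\mathrm{pol}(f)=\mathbb R^n\setminus\mathrm{dom}(f)$. Functions in $\mathcal R^0$ are called regulous. For $l\in\mathbb N$: consider compositions $\pi:M\to\mathbb R^2$ of successive blowings-up $M_i\to M_{i-1}$ ($M_0=\mathbb R^2$), each centred at points. An infinitely near point of order $j$ is a sequence $a_0\in M_0,\dots,a_j\in M_j$ where $M_i$ is the blowing-up of $M_{i-1}$ at $a_{i-1}$ and $a_i$ maps to $a_{i-1}$; the number of stages of $\pi$ is the maximal order of infinitely near points in $M$. $\mathcal R^k_{[l]}(\mathbb R^2)$ is the set of $f\in\mathcal R^k(\mathbb R^2)$ for which there is such a $\pi$ with at most $l$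 stages such that $f\circ\pi$ is regular on $M$. A polynomial $p\in\mathbb R[x,y]$ is locally positive definite at $a=(a_1,a_2)$ if, writing $p=\sum_{i\ge m}p_i$ with $p_i$ homogeneous of degree $i$ in the variables $(x-a_1,y-a_2)$ and $p_m\neq 0$, the lowest component $p_m$ is positive at every point of $\mathbb R^2$ other than $a$ (when $p(a)\ne 0$ this means $p(a)>0$). *)

theory Defs
  imports "HOL-Analysis.Analysis" "HOL-Computational_Algebra.Polynomial_Factorial"
begin

text \<open>Bivariate real polynomials R[x,y] are represented as real poly poly:
  the outer variable is y, the coefficients are polynomials in x.
  Points of R^2 are pairs (x,y).\<close>

definition peval :: "real poly poly \<Rightarrow> real \<times> real \<Rightarrow> real" where
  "peval P z = poly (poly P [:snd z:]) (fst z)"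

definition zariski_open :: "(real \<times> real) set \<Rightarrow> bool" where
  "zariski_open U \<longleftrightarrow> (\<exists>S. U = {z. \<exists>P\<in>S. peval P z \<noteq> 0})"

definition regulous :: "(real \<times> real \<Rightarrow> real) \<Rightarrow> bool" where
  "regulous f \<longleftrightarrow> continuous_on UNIV f \<and>
     (\<exists>U P Q. zariski_open U \<and> U \<noteq> {} \<and>
        (\<forall>z\<in>U. peval Q z \<noteq> 0 \<and> f z = peval P z / peval Q z))"

definition rat_regular_at :: "(real \<times> real \<Rightarrow> real) \<Rightarrow> real \<times> real \<Rightarrow> bool" where
  "rat_regular_at f z \<longleftrightarrow> (\<exists>P Q U. zariski_open U \<and> U \<noteq> {} \<and> peval Q z \<noteq> 0 \<and>
      (\<forall>w\<in>U. peval Q w \<noteq> 0 \<and> f w = peval P w / peval Q w))"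

text \<open>dom(f): the largest Zariski open set on which the rational function of f is regular
  (= the set of points at which it is regular); pol(f) its complement.\<close>
definition rdom :: "(real \<times> real \<Rightarrow> real) \<Rightarrow> (real \<times> real) set" where
  "rdom f = {z. rat_regular_at f z}"

definition pol :: "(real \<times> real \<Rightarrow> real) \<Rightarrow> (real \<times> real) set" where
  "pol f = UNIV - rdom f"

definition regular_at :: "(real \<times> real \<Rightarrow> real) \<Rightarrow> real \<times> real \<Rightarrow> bool" where
  "regular_at g z \<longleftrightarrow> (\<exists>P Q. peval Q z \<noteq> 0 \<and>
      (\<forall>w. peval Q w \<noteq> 0 \<longrightarrow> g w = peval P w / peval Q w))"

text \<open>The two standard affine charts of the blowing-up of R^2 at a point a;
  the exceptional divisor is u = 0 in the first chart and v = 0 in the second.\<close>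
definition chart1 :: "real \<times> real \<Rightarrow> real \<times> real \<Rightarrow> real \<times> real" where
  "chart1 a w = (fst a + fst w, snd a + fst w * snd w)"

definition chart2 :: "real \<times> real \<Rightarrow> real \<times> real \<Rightarrow> real \<times> real" where
  "chart2 a w = (fst a + fst w * snd w, snd a + snd w)"

text \<open>A composition of blowings-up with at most one stage is the blowing-up
  of R^2 at a finite set S of points of R^2. f o pi is regular on M iff it is
  regular at every point of M, i.e. f is regular at points outside S and
  f o chart is regular at every point of each exceptional divisor.\<close>
definition regular_after_blowup :: "(real \<times> real) set \<Rightarrow> (real \<times> real \<Rightarrow> real) \<Rightarrow> bool" where
  "regular_after_blowup S f \<longleftrightarrow> finite S \<and>
     (\<forall>z. z \<notin> S \<longrightarrow> regular_at f z) \<and>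
     (\<forall>a\<in>S. (\<forall>v. regular_at (f \<circ> chart1 a) (0, v)) \<and>
             (\<forall>u. regular_at (f \<circ> chart2 a) (u, 0)))"

definition R0_1 :: "(real \<times> real \<Rightarrow> real) set" where
  "R0_1 = {f. regulous f \<and> (\<exists>S. regular_after_blowup S f)}"

text \<open>Translation: shift P a (u,v) = P(a1+u, a2+v).\<close>
definition shift :: "real poly poly \<Rightarrow> real \<times> real \<Rightarrow> real poly poly" where
  "shift P a = pcompose (map_poly (\<lambda>c. pcompose c [:fst a, 1:]) P) [:[:snd a:], 1:]"

text \<open>Coefficient of (x-a1)^i (y-a2)^j.\<close>
definition tcoeff :: "real poly poly \<Rightarrow> real \<times> real \<Rightarrow> nat \<Rightarrow> nat \<Rightarrow> real" where
  "tcoeff P a i j = coeff (coeff (shift P a) j) i"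

definition homog_comp :: "real poly poly \<Rightarrow> real \<times> real \<Rightarrow> nat \<Rightarrow> real \<times> real \<Rightarrow> real" where
  "homog_comp P a m w =
     (\<Sum>i\<le>m. tcoeff P a i (m - i) * (fst w - fst a) ^ i * (snd w - snd a) ^ (m - i))"

definition loc_pos_def :: "real poly poly \<Rightarrow> real \<times> real \<Rightarrow> bool" where
  "loc_pos_def P a \<longleftrightarrow> (\<exists>m. (\<exists>i\<le>m. tcoeff P a i (m - i) \<noteq> 0) \<and>
      (\<forall>k<m. \<forall>i\<le>k. tcoeff P a i (k - i) = 0) \<and>
      (\<forall>w. w \<noteq> a \<longrightarrow> homog_comp P a m w > 0))"

end

theory Submission imports Defs "HOL-Computational_Algebra.Field_as_Ring" begin

lemma poly_poly_eval: "poly (poly R s) u = poly (map_poly (\<lambda>c. poly c u) R) (poly s u)"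
  by (induction R) (auto simp: map_poly_pCons)

lemma peval_alt: "peval P (x,y) = poly (map_poly (\<lambda>c. poly c x) P) y"
  unfolding peval_def using poly_poly_eval[of P "[:y:]" x] by simp

lemma peval_add[simp]: "peval (A + B) z = peval A z + peval B z"
  by (simp add: peval_def)
lemma peval_diff[simp]: "peval (A - B) z = peval A z - peval B z"
  by (simp add: peval_def)
lemma peval_minus[simp]: "peval (- A) z = - peval A z"
  by (simp add: peval_def)
lemma peval_mult[simp]: "peval (A * B) z = peval A z * peval B z"
  by (simp add: peval_def)
lemma peval_0[simp]: "peval 0 z = 0" by (simp add: peval_def)
lemma peval_1[simp]: "peval 1 z = 1" by (simp add: peval_def)
lemma peval_power[simp]: "peval (A ^ n) z = peval A z ^ n"
  by (induction n) auto
lemma peval_sum[simp]: "peval (sum F S) z = (\<Sum>i\<in>S. peval (F i) z)"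
  by (induction S rule: infinite_finite_induct) auto
lemma peval_const[simp]: "peval [:c:] z = poly c (fst z)"
  by (simp add: peval_def)
lemma peval_monom[simp]: "peval (monom (monom c e) j) z = c * fst z ^ e * snd z ^ j"
  by (simp add: peval_def poly_monom)
lemma peval_smult[simp]: "peval (smult c A) z = poly c (fst z) * peval A z"
  by (simp add: peval_def)

lemma poly_sum_lt: "degree (p::real poly) < N \<Longrightarrow> poly p x = (\<Sum>i<N. coeff p i * x ^ i)"
proof -
  assume d: "degree p < N"
  have "poly p x = (\<Sum>i\<le>degree p. coeff p i * x ^ i)" by (simp add: poly_altdef)
  also have "\<dots> = (\<Sum>i<N. coeff p i * x ^ i)"
    by (rule sum.mono_neutral_cong_left) (use d in \<open>auto simp: coeff_eq_0\<close>)
  finally show ?thesis .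
qed

definition bnd :: "real poly poly \<Rightarrow> nat" where
  "bnd P = degree P + (\<Sum>j\<le>degree P. degree (coeff P j))"

lemma bnd_coeff_zero: "bnd P < i \<or> bnd P < j \<Longrightarrow> coeff (coeff P j) i = 0"
proof -
  assume a: "bnd P < i \<or> bnd P < j"
  show ?thesis
  proof (cases "j \<le> degree P")
    case True
    have "degree (coeff P j) \<le> (\<Sum>j\<le>degree P. degree (coeff P j))"
      by (rule member_le_sum) (use True in auto)
    then have "degree (coeff P j) < i" using a True unfolding bnd_def by auto
    then show ?thesis by (simp add: coeff_eq_0)
  next
    case False then show ?thesis by (simp add: coeff_eq_0)
  qed
qed

lemma peval_expand:
  assumes "bnd P < N"
  shows "peval P (x,y) = (\<Sum>i<N. \<Sum>j<N. coeff (coeff P j) i * x ^ i * y ^ j)"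
proof -
  have dm: "degree (map_poly (\<lambda>c. poly c x) P) < N"
    using map_poly_degree_leq[of "\<lambda>c. poly c x" P] assms unfolding bnd_def by linarith
  have "peval P (x,y) = (\<Sum>j<N. poly (coeff P j) x * y ^ j)"
    unfolding peval_alt by (subst poly_sum_lt[OF dm]) (simp add: coeff_map_poly)
  also have "\<dots> = (\<Sum>j<N. \<Sum>i<N. coeff (coeff P j) i * x ^ i * y ^ j)"
  proof (rule sum.cong[OF refl])
    fix j assume "j \<in> {..<N}"
    have "degree (coeff P j) < N"
    proof (rule ccontr)
      assume "\<not> degree (coeff P j) < N"
      then have "bnd P < degree (coeff P j)" using assms by auto
      then have "coeff (coeff P j) (degree (coeff P j)) = 0" by (rule bnd_coeff_zero[OF disjI1])
      then have "coeff P j = 0" by simp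
      then show False using \<open>\<not> degree (coeff P j) < N\<close> assms by simp
    qed
    then show "poly (coeff P j) x * y ^ j = (\<Sum>i<N. coeff (coeff P j) i * x ^ i * y ^ j)"
      by (subst poly_sum_lt) (auto simp: sum_distrib_right)
  qed
  also have "\<dots> = (\<Sum>i<N. \<Sum>j<N. coeff (coeff P j) i * x ^ i * y ^ j)"
    by (rule sum.swap)
  finally show ?thesis .
qed

lemma peval_cont: "continuous_on S (peval P)"
proof -
  have "peval P = (\<lambda>z. \<Sum>i<Suc (bnd P). \<Sum>j<Suc (bnd P). coeff (coeff P j) i * fst z ^ i * snd z ^ j)"
    using peval_expand[of P "Suc (bnd P)"] by (auto simp: fun_eq_iff)
  moreover have "continuous_on S (\<lambda>z. \<Sum>i<Suc (bnd P). \<Sum>j<Suc (bnd P). coeff (coeff P j) i * fst z ^ i * snd z ^ j)" by (intro continuous_intros)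
  ultimately show ?thesis by simp
qed

lemma peval_isCont: "isCont (peval P) z"
  using peval_cont[of UNIV P] continuous_on_eq_continuous_at by blast

lemma peval_open: "open {z. peval P z \<noteq> 0}"
  using continuous_open_preimage[OF peval_cont[of UNIV P] open_UNIV, of "-{0}"] by (auto simp: vimage_def)

lemma peval_zero_open:
  assumes W: "open W" "w0 \<in> W" and z: "\<forall>z\<in>W. peval P z = 0"
  shows "P = 0"
proof -
  obtain e where e: "e > 0" "ball w0 e \<subseteq> W" using W open_contains_ball by blast
  obtain x0 y0 where w0: "w0 = (x0,y0)" by (cases w0)
  have inb: "(x,y) \<in> W" if "\<bar>x - x0\<bar> < e/2" "\<bar>y - y0\<bar> < e/2" for x y
  proof -
    have "dist (x0,y0) (x,y) \<le> \<bar>x0 - x\<bar> + \<bar>y0 - y\<bar>"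
      unfolding dist_Pair_Pair dist_real_def using sqrt_sum_squares_le_sum_abs[of "x0-x" "y0-y"] by simp
    moreover have "\<bar>x0 - x\<bar> + \<bar>y0 - y\<bar> < e" using that by (simp add: abs_minus_commute)
    ultimately have "dist w0 (x,y) < e" using w0 by auto
    then show ?thesis using e by auto
  qed
  have cz: "poly (coeff P j) x = 0" if "\<bar>x - x0\<bar> < e/2" for x j
  proof -
    let ?R = "map_poly (\<lambda>c. poly c x) P"
    have "{y0 - e/2<..<y0+e/2} \<subseteq> {y. poly ?R y = 0}"
    proof
      fix y assume "y \<in> {y0 - e/2<..<y0+e/2}"
      then have "-(e/2) < y - y0 \<and> y - y0 < e/2" by auto
      then have "\<bar>y - y0\<bar> < e/2" by arith
      then have "peval P (x,y) = 0" using inb[OF that] z by blast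
      then show "y \<in> {y. poly ?R y = 0}" by (simp add: peval_alt)
    qed
    moreover have "infinite {y0 - e/2<..<y0+e/2}" using e by simp
    ultimately have "?R = 0" using poly_roots_finite finite_subset by blast
    then have "coeff ?R j = 0" by simp
    then show ?thesis by (simp add: coeff_map_poly)
  qed
  show ?thesis
  proof (rule poly_eqI)
    fix j
    have "{x0 - e/2<..<x0+e/2} \<subseteq> {x. poly (coeff P j) x = 0}"
    proof
      fix x assume "x \<in> {x0 - e/2<..<x0+e/2}"
      then have "\<bar>x - x0\<bar> < e/2" by (cases "x \<ge> x0") (auto simp: abs_if)
      then show "x \<in> {x. poly (coeff P j) x = 0}" using cz by blast
    qed
    moreover have "infinite {x0 - e/2<..<x0+e/2}" using e by simp
    ultimately have "coeff P j = 0" using poly_roots_finite finite_subset by blast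
    then show "coeff P j = coeff 0 j" by simp
  qed
qed


lemma peval_nonzero_exists:
  assumes "P \<noteq> 0" "open W" "w0 \<in> W"
  shows "\<exists>z\<in>W. peval P z \<noteq> 0"
  using peval_zero_open[OF assms(2,3)] assms(1) by blast

lemma zariski_open_open: "zariski_open U \<Longrightarrow> open U"
proof -
  assume "zariski_open U"
  then obtain S where U: "U = {z. \<exists>P\<in>S. peval P z \<noteq> 0}" unfolding zariski_open_def by blast
  have "U = (\<Union>P\<in>S. {z. peval P z \<noteq> 0})" using U by auto
  then show "open U" using peval_open by auto
qed

lemma zariski_open_poly:
  assumes "zariski_open U" "U \<noteq> {}"
  shows "\<exists>P. P \<noteq> 0 \<and> {z. peval P z \<noteq> 0} \<subseteq> U"
proof -
  obtain S where U: "U = {z. \<exists>P\<in>S. peval P z \<noteq> 0}" using assms(1) unfolding zariski_open_def by blast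
  obtain z where "z \<in> U" using assms(2) by blast
  then obtain P where "P \<in> S" "peval P z \<noteq> 0" using U by blast
  then have "P \<noteq> 0" by auto
  moreover have "{z. peval P z \<noteq> 0} \<subseteq> U" using U \<open>P \<in> S\<close> by blast
  ultimately show ?thesis by blast
qed

lemma zariski_open_single: "zariski_open {z. peval P z \<noteq> 0}"
  unfolding zariski_open_def by (rule exI[of _ "{P}"]) auto

lemma cont_zero_dense:
  assumes g: "continuous_on UNIV g" and P: "P \<noteq> 0" and z: "\<forall>z. peval P z \<noteq> 0 \<longrightarrow> g z = (0::real)"
  shows "g w = 0"
proof (rule ccontr)
  assume "g w \<noteq> 0"
  have "open {z. g z \<noteq> 0}"
    using continuous_open_preimage[OF g open_UNIV, of "-{0}"] by (auto simp: vimage_def)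
  then obtain z where "z \<in> {z. g z \<noteq> 0}" "peval P z \<noteq> 0"
    using peval_nonzero_exists[OF P, of "{z. g z \<noteq> 0}" w] \<open>g w \<noteq> 0\<close> by auto
  then show False using z by auto
qed

lemma exists_nonzero: "P \<noteq> 0 \<Longrightarrow> \<exists>z. peval P z \<noteq> 0"
  using peval_nonzero_exists[of P UNIV] by auto

definition Hyp :: "(real \<times> real \<Rightarrow> real) \<Rightarrow> real poly poly \<Rightarrow> real poly poly \<Rightarrow> bool" where
  "Hyp f p q \<longleftrightarrow> regulous f \<and> coprime p q \<and> (\<forall>z. peval q z \<ge> 0) \<and>
     (\<forall>z\<in>rdom f. peval q z \<noteq> 0) \<and> (\<forall>z\<in>rdom f. f z = peval p z / peval q z)"

lemma regulous_U0:
  assumes "regulous f"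
  obtains P0 where "P0 \<noteq> 0" "\<forall>z. peval P0 z \<noteq> 0 \<longrightarrow> z \<in> rdom f"
proof -
  from assms obtain U P Q where U: "zariski_open U" "U \<noteq> {}"
    "\<forall>z\<in>U. peval Q z \<noteq> 0 \<and> f z = peval P z / peval Q z" unfolding regulous_def by blast
  obtain P0 where P0: "P0 \<noteq> 0" "{z. peval P0 z \<noteq> 0} \<subseteq> U" using zariski_open_poly[OF U(1,2)] by blast
  have "z \<in> rdom f" if "z \<in> U" for z
    unfolding rdom_def rat_regular_at_def using U that by blast
  then show ?thesis using that[OF P0(1)] P0(2) by blast
qed

lemma Hyp_q_nonzero: "Hyp f p q \<Longrightarrow> q \<noteq> 0"
proof
  assume H: "Hyp f p q" and q: "q = 0"
  from H have "regulous f" unfolding Hyp_def by blast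
  then obtain P0 where "P0 \<noteq> 0" "\<forall>z. peval P0 z \<noteq> 0 \<longrightarrow> z \<in> rdom f" by (rule regulous_U0)
  then obtain z where "z \<in> rdom f" using exists_nonzero by blast
  then have "peval q z \<noteq> 0" using H unfolding Hyp_def by blast
  then show False using q by simp
qed

lemma Hyp_cont: "Hyp f p q \<Longrightarrow> continuous_on UNIV f"
  unfolding Hyp_def regulous_def by blast

lemma Hyp_fq: assumes H: "Hyp f p q" shows "f z * peval q z = peval p z"
proof -
  from H have "regulous f" unfolding Hyp_def by blast
  then obtain P0 where P0: "P0 \<noteq> 0" "\<forall>z. peval P0 z \<noteq> 0 \<longrightarrow> z \<in> rdom f" by (rule regulous_U0)
  have "(\<lambda>z. f z * peval q z - peval p z) z = 0"
  proof (rule cont_zero_dense[OF _ P0(1)])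
    show "continuous_on UNIV (\<lambda>z. f z * peval q z - peval p z)"
      using Hyp_cont[OF H] by (intro continuous_intros peval_cont)
    show "\<forall>z. peval P0 z \<noteq> 0 \<longrightarrow> f z * peval q z - peval p z = 0"
      using P0(2) H unfolding Hyp_def by auto
  qed
  then show ?thesis by simp
qed

lemma Hyp_f_eq: "Hyp f p q \<Longrightarrow> peval q z \<noteq> 0 \<Longrightarrow> f z = peval p z / peval q z"
  using Hyp_fq[of f p q z] by (simp add: field_simps)

lemma Hyp_rdom: assumes H: "Hyp f p q" shows "z \<in> rdom f \<longleftrightarrow> peval q z \<noteq> 0"
proof
  assume "peval q z \<noteq> 0"
  have "q \<noteq> 0" using Hyp_q_nonzero[OF H] .
  let ?U = "{w. peval (q * q) w \<noteq> 0}"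
  have "zariski_open ?U" by (rule zariski_open_single)
  moreover have "z \<in> ?U" using \<open>peval q z \<noteq> 0\<close> by simp
  then have "?U \<noteq> {}" by blast
  moreover have "\<forall>w\<in>?U. peval q w \<noteq> 0 \<and> f w = peval p w / peval q w"
    using Hyp_f_eq[OF H] by auto
  ultimately show "z \<in> rdom f" unfolding rdom_def rat_regular_at_def
    using \<open>peval q z \<noteq> 0\<close> by blast
next
  assume "z \<in> rdom f"
  then obtain P Q U where U: "zariski_open U" "U \<noteq> {}" "peval Q z \<noteq> 0"
    "\<forall>w\<in>U. peval Q w \<noteq> 0 \<and> f w = peval P w / peval Q w"
    unfolding rdom_def rat_regular_at_def by blast
  obtain P1 where P1: "P1 \<noteq> 0" "{z. peval P1 z \<noteq> 0} \<subseteq> U" using zariski_open_poly[OF U(1,2)] by blast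
  have q0: "q \<noteq> 0" using Hyp_q_nonzero[OF H] .
  obtain w0 where w0: "peval (P1 * q) w0 \<noteq> 0" using exists_nonzero[of "P1 * q"] P1 q0 by auto
  have "p * Q - P * q = 0"
  proof (rule peval_zero_open[of _ w0])
    show "open {w. peval (P1 * q) w \<noteq> 0}" by (rule peval_open)
    show "w0 \<in> {w. peval (P1 * q) w \<noteq> 0}" using w0 by simp
    show "\<forall>w\<in>{w. peval (P1 * q) w \<noteq> 0}. peval (p * Q - P * q) w = 0"
    proof
      fix w assume "w \<in> {w. peval (P1 * q) w \<noteq> 0}"
      then have w: "peval P1 w \<noteq> 0" "peval q w \<noteq> 0" by auto
      then have "w \<in> U" using P1 by auto
      then have "peval Q w \<noteq> 0" "f w = peval P w / peval Q w" using U by auto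
      moreover have "f w = peval p w / peval q w" using Hyp_f_eq[OF H w(2)] .
      ultimately show "peval (p * Q - P * q) w = 0" using w by (simp add: field_simps)
    qed
  qed
  then have dv: "q dvd p * Q" by (metis dvd_triv_right eq_iff_diff_eq_0)
  have cop: "coprime q p" using H unfolding Hyp_def by (simp add: coprime_commute)
  have "q dvd Q" using dv coprime_dvd_mult_right_iff[OF cop] by simp
  then obtain r where "Q = q * r" by blast
  then show "peval q z \<noteq> 0" using U(3) by auto
qed


lemma peval_monom1[simp]: "peval (monom c j) z = poly c (fst z) * snd z ^ j"
  by (simp add: peval_def poly_monom)

lemma peval_pcompose: "peval (pcompose R S) (x,y) = peval R (x, peval S (x,y))"
  unfolding peval_def by (simp add: poly_pcompose poly_poly_eval)

lemma peval_shift: "peval (shift P a) (u,v) = peval P (fst a + u, snd a + v)"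
proof -
  have "peval (shift P a) (u,v) = peval (map_poly (\<lambda>c. pcompose c [:fst a, 1:]) P) (u, snd a + v)"
    unfolding shift_def peval_pcompose by (simp add: peval_def)
  also have "\<dots> = poly (map_poly (\<lambda>c. poly c u) (map_poly (\<lambda>c. pcompose c [:fst a, 1:]) P)) (snd a + v)"
    by (rule peval_alt)
  also have "map_poly (\<lambda>c. poly c u) (map_poly (\<lambda>c. pcompose c [:fst a, 1:]) P)
     = map_poly (\<lambda>c. poly c (fst a + u)) P"
    by (subst map_poly_map_poly) (auto simp: o_def poly_pcompose add.commute)
  finally show ?thesis by (simp add: peval_alt)
qed

definition Xp :: "real poly poly" where "Xp = [:[:0,1:]:]"

lemma peval_Xp[simp]: "peval Xp z = fst z"
  by (simp add: Xp_def)

definition sig :: "real \<times> real \<Rightarrow> real poly poly \<Rightarrow> real poly poly" where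
  "sig a P = pcompose (shift P a) [:0, [:0,1:]:]"

lemma peval_sig: "peval (sig a P) w = peval P (chart1 a w)"
proof -
  obtain u v where w: "w = (u,v)" by (cases w)
  have "peval [:0, [:0,1:]:] (u,v) = u * v" by (simp add: peval_def)
  then show ?thesis unfolding sig_def w by (simp add: peval_pcompose peval_shift chart1_def)
qed

lemma poly_eq_peval: "(\<And>z. peval A z = peval B z) \<Longrightarrow> A = B"
proof -
  assume "\<And>z. peval A z = peval B z"
  then have "A - B = 0" by (intro peval_zero_open[of UNIV 0]) auto
  then show ?thesis by simp
qed

lemma shift_mult: "shift (A * B) a = shift A a * shift B a"
  by (rule poly_eq_peval) (auto simp: peval_shift)
lemma shift_1: "shift 1 a = 1"
  by (rule poly_eq_peval) (auto simp: peval_shift)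
lemma shift_shift: "shift (shift A a) (- a) = A"
  by (rule poly_eq_peval) (auto simp: peval_shift)
lemma shift_shift': "shift (shift A (- a)) a = A"
  by (rule poly_eq_peval) (auto simp: peval_shift)

lemma coprime_transfer:
  fixes \<phi> \<psi> :: "real poly poly \<Rightarrow> real poly poly"
  assumes m1: "\<And>A B. \<phi> (A * B) = \<phi> A * \<phi> B" and m2: "\<And>A B. \<psi> (A * B) = \<psi> A * \<psi> B"
    and i1: "\<And>A. \<psi> (\<phi> A) = A" and i2: "\<And>A. \<phi> (\<psi> A) = A" and one: "\<phi> 1 = 1"
    and cop: "coprime p q"
  shows "coprime (\<phi> p) (\<phi> q)"
proof (rule coprimeI)
  fix d assume d: "d dvd \<phi> p" "d dvd \<phi> q"
  have dv: "\<psi> d dvd A" if "d dvd \<phi> A" for A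
  proof -
    from that obtain k where "\<phi> A = d * k" by blast
    then have "\<psi> (\<phi> A) = \<psi> d * \<psi> k" by (simp add: m2)
    then show ?thesis using i1 by (metis dvd_triv_left)
  qed
  have "is_unit (\<psi> d)" using coprime_common_divisor[OF cop dv[OF d(1)] dv[OF d(2)]] .
  then obtain w where "\<psi> d * w = 1" by (metis dvd_def)
  then have "\<phi> (\<psi> d) * \<phi> w = 1" using m1 one by metis
  then show "is_unit d" using i2 by (metis dvd_triv_left)
qed

lemma coprime_shift: "coprime p q \<Longrightarrow> coprime (shift p a) (shift q a)"
  by (rule coprime_transfer[where \<psi>="\<lambda>A. shift A (-a)"])
     (auto simp: shift_mult shift_1 shift_shift shift_shift')

lemma Xp_dvd_iff: "Xp dvd A \<longleftrightarrow> (\<forall>y. peval A (0,y) = 0)"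
proof
  assume "Xp dvd A" then obtain B where "A = Xp * B" by blast
  then show "\<forall>y. peval A (0,y) = 0" by simp
next
  assume a: "\<forall>y. peval A (0,y) = 0"
  then have "map_poly (\<lambda>c. poly c 0) A = 0"
    using poly_all_0_iff_0 by (metis peval_alt)
  then have "\<forall>n. poly (coeff A n) 0 = 0"
    by (metis coeff_0 coeff_map_poly poly_0)
  then have "\<forall>n. [:0,1:] dvd coeff A n"
    by (metis (no_types) poly_eq_0_iff_dvd minus_zero)
  then show "Xp dvd A" unfolding Xp_def by (simp add: const_poly_dvd_iff)
qed

lemma unit_peval_nonzero: "is_unit (A::real poly poly) \<Longrightarrow> peval A z \<noteq> 0"
proof -
  assume "is_unit A" then obtain w where "1 = A * w" by blast
  then have "1 = peval A z * peval w z" by (metis peval_1 peval_mult)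
  then show ?thesis by auto
qed

lemma Xp_nonzero: "Xp \<noteq> 0" unfolding Xp_def by simp

lemma Xp_prime: "prime_elem Xp"
proof (rule prime_elemI)
  show "Xp \<noteq> 0" by (rule Xp_nonzero)
  show "\<not> is_unit Xp" using unit_peval_nonzero[of Xp "(0,0)"] by auto
  fix A B assume "Xp dvd A * B"
  then have ab: "\<forall>y. peval A (0,y) * peval B (0,y) = 0" by (simp add: Xp_dvd_iff)
  have "map_poly (\<lambda>c. poly c 0) A * map_poly (\<lambda>c. poly c 0) B = 0"
    using ab poly_all_0_iff_0 by (metis peval_alt poly_mult)
  then have "map_poly (\<lambda>c. poly c 0) A = 0 \<or> map_poly (\<lambda>c. poly c 0) B = 0" by simp
  then show "Xp dvd A \<or> Xp dvd B" by (auto simp: Xp_dvd_iff peval_alt)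
qed

definition psi :: "nat \<Rightarrow> real poly poly \<Rightarrow> real poly poly" where
  "psi N g = (\<Sum>j<N. monom (coeff g j * [:0,1:] ^ (N - j)) j)"

lemma peval_deg: "degree g < N \<Longrightarrow> peval g (x,z) = (\<Sum>j<N. poly (coeff g j) x * z ^ j)"
proof -
  assume d: "degree g < N"
  have dm: "degree (map_poly (\<lambda>c. poly c x) g) < N"
    using map_poly_degree_leq[of "\<lambda>c. poly c x" g] d by linarith
  show ?thesis unfolding peval_alt by (subst poly_sum_lt[OF dm]) (simp add: coeff_map_poly)
qed

lemma peval_psi:
  assumes "degree g < N" "x \<noteq> 0"
  shows "peval (psi N g) (x,y) = x ^ N * peval g (x, y / x)"
proof -
  have "peval (psi N g) (x,y) = (\<Sum>j<N. poly (coeff g j) x * x ^ (N - j) * y ^ j)"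
    by (simp add: psi_def poly_power mult.assoc)
  also have "\<dots> = (\<Sum>j<N. x ^ N * (poly (coeff g j) x * (y / x) ^ j))"
  proof (rule sum.cong[OF refl])
    fix j assume "j \<in> {..<N}"
    then have "x ^ N = x ^ (N - j) * x ^ j" by (simp add: power_add[symmetric])
    then show "poly (coeff g j) x * x ^ (N - j) * y ^ j = x ^ N * (poly (coeff g j) x * (y / x) ^ j)"
      using assms(2) by (simp add: power_divide field_simps)
  qed
  also have "\<dots> = x ^ N * peval g (x, y / x)"
    by (simp add: peval_deg[OF assms(1)] sum_distrib_left)
  finally show ?thesis .
qed

lemma psi_chart: "degree g < N \<Longrightarrow> u \<noteq> 0 \<Longrightarrow> peval (psi N g) (u, u * v) = u ^ N * peval g (u, v)"
  by (simp add: peval_psi)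

lemma eq_on_xnz:
  assumes "\<And>x y. x \<noteq> 0 \<Longrightarrow> peval A (x,y) = peval B (x,y)"
  shows "A = B"
proof -
  have "A - B = 0"
  proof (rule peval_zero_open[of "{z. peval Xp z \<noteq> 0}" "(1,0)"])
    show "open {z. peval Xp z \<noteq> 0}" by (rule peval_open)
  qed (use assms in auto)
  then show ?thesis by simp
qed

lemma psi_mult:
  assumes "degree g < D" "degree h < E"
  shows "psi (D + E) (g * h) = psi D g * psi E h"
proof (rule eq_on_xnz)
  fix x y :: real assume x: "x \<noteq> 0"
  have d: "degree (g * h) < D + E" using degree_mult_le[of g h] assms by linarith
  show "peval (psi (D + E) (g * h)) (x,y) = peval (psi D g * psi E h) (x,y)"
    using x by (simp add: peval_psi[OF d x] peval_psi[OF assms(1) x] peval_psi[OF assms(2) x] power_add)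
qed

lemma psi_sig:
  assumes "degree (sig a P) < N"
  shows "psi N (sig a P) = Xp ^ N * shift P a"
proof (rule eq_on_xnz)
  fix x y :: real assume x: "x \<noteq> 0"
  show "peval (psi N (sig a P)) (x,y) = peval (Xp ^ N * shift P a) (x,y)"
    using x by (simp add: peval_psi[OF assms x] peval_sig chart1_def peval_shift)
qed

lemma psi_nonzero:
  assumes "g \<noteq> 0" "degree g < N"
  shows "psi N g \<noteq> 0"
proof
  assume p0: "psi N g = 0"
  have "g = 0"
  proof (rule eq_on_xnz)
    fix x y :: real assume x: "x \<noteq> 0"
    have "peval (psi N g) (x, x * y) = 0" using p0 by simp
    then show "peval g (x,y) = peval 0 (x,y)" using psi_chart[OF assms(2) x, of y] x by simp
  qed
  then show False using assms by simp
qed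

lemma prime_factor_zero:
  fixes A :: "real poly poly"
  assumes "A \<noteq> 0" "peval A z = 0"
  shows "\<exists>g. prime_elem g \<and> g dvd A \<and> peval g z = 0"
  using assms
proof (induction A rule: prime_divisors_induct)
  case zero then show ?case by simp
next
  case (unit x) then show ?case using unit_peval_nonzero by blast
next
  case (factor p x)
  show ?case
  proof (cases "peval p z = 0")
    case True then show ?thesis using factor by (intro exI[of _ p]) auto
  next
    case False
    then have "peval x z = 0" "x \<noteq> 0" using factor by auto
    then obtain g where "prime_elem g" "g dvd x" "peval g z = 0" using factor by blast
    then show ?thesis by (intro exI[of _ g]) auto
  qed
qed


definition tpoly :: "(nat \<Rightarrow> nat \<Rightarrow> real) \<Rightarrow> nat \<Rightarrow> nat \<Rightarrow> real poly poly" where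
  "tpoly c N m = (\<Sum>i<N. \<Sum>j<N. monom (monom (if m \<le> i + j then c i j else 0) (i + j - m)) j)"

definition Q1 :: "(nat \<Rightarrow> nat \<Rightarrow> real) \<Rightarrow> nat \<Rightarrow> real \<Rightarrow> real" where
  "Q1 c m v = (\<Sum>i\<le>m. c i (m - i) * v ^ (m - i))"

lemma peval_tpoly: "peval (tpoly c N m) (u,v) =
   (\<Sum>i<N. \<Sum>j<N. (if m \<le> i + j then c i j else 0) * u ^ (i + j - m) * v ^ j)"
  by (simp add: tpoly_def poly_monom)

lemma sig_tpoly:
  assumes exp: "\<forall>s t. peval q (fst a + s, snd a + t) = (\<Sum>i<N. \<Sum>j<N. c i j * s ^ i * t ^ j)"
    and m2: "\<forall>k<m. \<forall>i\<le>k. c i (k - i) = 0"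
  shows "sig a q = Xp ^ m * tpoly c N m"
proof (rule poly_eq_peval)
  fix w :: "real \<times> real" obtain u v where w: "w = (u,v)" by (cases w)
  have "peval (sig a q) w = (\<Sum>i<N. \<Sum>j<N. c i j * u ^ i * (u * v) ^ j)"
    using exp by (simp add: peval_sig chart1_def w)
  also have "\<dots> = (\<Sum>i<N. \<Sum>j<N. u ^ m * ((if m \<le> i + j then c i j else 0) * u ^ (i + j - m) * v ^ j))"
  proof (intro sum.cong refl)
    fix i j
    show "c i j * u ^ i * (u * v) ^ j = u ^ m * ((if m \<le> i + j then c i j else 0) * u ^ (i + j - m) * v ^ j)"
    proof (cases "m \<le> i + j")
      case True
      then have "u ^ i * u ^ j = u ^ m * u ^ (i + j - m)" by (simp add: power_add[symmetric])
      then show ?thesis using True by (simp add: power_mult_distrib algebra_simps)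
    next
      case False
      then have "i + j < m" by simp
      then have "c i (i + j - i) = 0" using m2 le_add1 by blast
      then show ?thesis using False by simp
    qed
  qed
  also have "\<dots> = peval (Xp ^ m * tpoly c N m) w"
    by (simp add: w peval_tpoly sum_distrib_left)
  finally show "peval (sig a q) w = peval (Xp ^ m * tpoly c N m) w" .
qed

lemma sum_atMost_rev: "(\<Sum>i\<le>(m::nat). F i) = (\<Sum>i\<le>m. F (m - i))"
  by (rule sum.reindex_bij_witness[where i="\<lambda>i. m - i" and j="\<lambda>i. m - i"]) auto

lemma tpoly_at0:
  assumes cz: "\<forall>i j. N \<le> i \<or> N \<le> j \<longrightarrow> c i j = 0"
  shows "peval (tpoly c N m) (0,v) = Q1 c m v"
proof -
  have "peval (tpoly c N m) (0,v) = (\<Sum>i<N. \<Sum>j<N. if j = m - i then (if i \<le> m then c i (m - i) * v ^ (m - i) else 0) else 0)"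
    unfolding peval_tpoly by (intro sum.cong refl) (auto simp: zero_power)
  also have "\<dots> = (\<Sum>i<N. if m - i < N then (if i \<le> m then c i (m - i) * v ^ (m - i) else 0) else 0)"
    by (simp add: sum.delta')
  also have "\<dots> = (\<Sum>i<N + m + 1. if i \<le> m then c i (m - i) * v ^ (m - i) else 0)"
    by (rule sum.mono_neutral_cong_left) (use cz in auto)
  also have "\<dots> = (\<Sum>i\<in>{i\<in>{..<N + m + 1}. i \<le> m}. c i (m - i) * v ^ (m - i))"
    by (rule sum.inter_filter[symmetric]) simp
  also have "{i\<in>{..<N + m + 1}. i \<le> m} = {..m}" by auto
  also have "(\<Sum>i\<in>{..m}. c i (m - i) * v ^ (m - i)) = Q1 c m v" unfolding Q1_def by simp
  finally show ?thesis .
qed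

lemma poly_sum_zero_coeffs:
  assumes "\<forall>v::real. (\<Sum>j\<le>m. d j * v ^ j) = 0" "k \<le> m"
  shows "d k = 0"
proof -
  let ?R = "\<Sum>j\<le>m. monom (d j) j"
  have "\<forall>v. poly ?R v = 0" using assms(1) by (simp add: poly_sum poly_monom)
  then have "?R = 0" using poly_all_0_iff_0 by blast
  then have "coeff ?R k = 0" by simp
  moreover have "coeff ?R k = d k" using assms(2) by (simp add: coeff_sum coeff_monom)
  ultimately show ?thesis by simp
qed

lemma Q1_nonzero:
  assumes "\<exists>i\<le>m. c i (m - i) \<noteq> 0"
  shows "\<exists>v. Q1 c m v \<noteq> 0"
proof (rule ccontr)
  assume "\<not> (\<exists>v. Q1 c m v \<noteq> 0)"
  then have a: "\<forall>v. (\<Sum>j\<le>m. c (m - j) j * v ^ j) = 0"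
    unfolding Q1_def by (subst sum_atMost_rev) simp
  from assms obtain i where i: "i \<le> m" "c i (m - i) \<noteq> 0" by blast
  have "c (m - (m - i)) (m - i) = 0" by (rule poly_sum_zero_coeffs[OF a]) simp
  then show False using i by simp
qed

lemma C1:
  assumes H: "Hyp f p q"
    and exp: "\<forall>s t. peval q (fst a + s, snd a + t) = (\<Sum>i<N. \<Sum>j<N. c i j * s ^ i * t ^ j)"
    and cz: "\<forall>i j. N \<le> i \<or> N \<le> j \<longrightarrow> c i j = 0"
    and m1: "\<exists>i\<le>m. c i (m - i) \<noteq> 0" and m2: "\<forall>k<m. \<forall>i\<le>k. c i (k - i) = 0"
    and reg: "regular_at (f \<circ> chart1 a) (0, v0)"
  shows "Q1 c m v0 \<noteq> 0"
proof
  assume Qz: "Q1 c m v0 = 0"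
  define qt where "qt = tpoly c N m"
  have sq: "sig a q = Xp ^ m * qt" unfolding qt_def by (rule sig_tpoly[OF exp m2])
  have qt0: "\<And>v. peval qt (0,v) = Q1 c m v" unfolding qt_def by (rule tpoly_at0[OF cz])
  obtain v1 where v1: "Q1 c m v1 \<noteq> 0" using Q1_nonzero[of m c, OF m1] by blast
  have nX: "\<not> Xp dvd qt" using v1 qt0 Xp_dvd_iff by metis
  have qtnz: "qt \<noteq> 0" using nX by auto
  obtain g where g: "prime_elem g" "g dvd qt" "peval g (0,v0) = 0"
    using prime_factor_zero[OF qtnz, of "(0,v0)"] qt0 Qz by auto
  obtain P Q where PQ: "peval Q (0,v0) \<noteq> 0"
    "\<forall>w. peval Q w \<noteq> 0 \<longrightarrow> (f \<circ> chart1 a) w = peval P w / peval Q w"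
    using reg unfolding regular_at_def by blast
  have Qnz: "Q \<noteq> 0" using PQ(1) by auto
  have sqnz: "sig a q \<noteq> 0" using sq qtnz Xp_nonzero by simp
  obtain w0 where w0: "peval (Q * sig a q) w0 \<noteq> 0"
    using exists_nonzero[of "Q * sig a q"] Qnz sqnz by auto
  have "sig a p * Q - P * sig a q = 0"
  proof (rule peval_zero_open[of "{w. peval (Q * sig a q) w \<noteq> 0}" w0])
    show "open {w. peval (Q * sig a q) w \<noteq> 0}" by (rule peval_open)
    show "w0 \<in> {w. peval (Q * sig a q) w \<noteq> 0}" using w0 by simp
    show "\<forall>w\<in>{w. peval (Q * sig a q) w \<noteq> 0}. peval (sig a p * Q - P * sig a q) w = 0"
    proof
      fix w assume "w \<in> {w. peval (Q * sig a q) w \<noteq> 0}"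
      then have w: "peval Q w \<noteq> 0" "peval q (chart1 a w) \<noteq> 0" by (auto simp: peval_sig)
      have "f (chart1 a w) = peval P w / peval Q w" using PQ(2) w(1) by (metis comp_apply)
      moreover have "f (chart1 a w) = peval p (chart1 a w) / peval q (chart1 a w)"
        by (rule Hyp_f_eq[OF H w(2)])
      ultimately show "peval (sig a p * Q - P * sig a q) w = 0"
        using w by (simp add: peval_sig field_simps)
    qed
  qed
  then have id: "sig a p * Q = P * sig a q" by simp
  have gq: "g dvd sig a q" using g(2) sq by simp
  then have "g dvd sig a p * Q" using id by simp
  moreover have "\<not> g dvd Q"
  proof
    assume "g dvd Q" then obtain k where "Q = g * k" by blast
    then show False using PQ(1) g(3) by simp
  qed
  ultimately have gp: "g dvd sig a p" using prime_elem_dvd_mult_iff[OF g(1)] by blast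
  obtain h1 where h1: "sig a p = g * h1" using gp by blast
  obtain h2 where h2: "sig a q = g * h2" using gq by blast
  define D where "D = Suc (degree g)"
  define G where "G = psi D g"
  have gnz: "g \<noteq> 0" using g(1) by auto
  have Gnz: "G \<noteq> 0" unfolding G_def D_def by (rule psi_nonzero[OF gnz]) simp
  have Gdv: "G dvd Xp ^ (D + Suc (degree h)) * shift r a" if h: "sig a r = g * h" for r h
  proof -
    have dd: "degree (sig a r) < D + Suc (degree h)"
      using degree_mult_le[of g h] h unfolding D_def by simp
    have "Xp ^ (D + Suc (degree h)) * shift r a = psi (D + Suc (degree h)) (sig a r)"
      by (rule psi_sig[OF dd, symmetric])
    also have "\<dots> = G * psi (Suc (degree h)) h" unfolding h G_def
      by (rule psi_mult) (auto simp: D_def)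
    finally show ?thesis by simp
  qed
  have nuX: "\<not> is_unit Xp" using Xp_prime by (simp add: prime_elem_def)
  obtain G' where G': "G = Xp ^ multiplicity Xp G * G'" "\<not> Xp dvd G'"
    using multiplicity_decompose'[OF Gnz nuX] by blast
  define e where "e = multiplicity Xp G"
  have cop1: "coprime G' (Xp ^ n)" for n
    using prime_elem_imp_coprime[OF Xp_prime G'(2)] by (simp add: coprime_commute)
  have G'dv: "G' dvd shift r a" if h: "sig a r = g * h" for r h
  proof -
    have "G' dvd G" using G'(1) by (metis dvd_triv_right)
    then have "G' dvd Xp ^ (D + Suc (degree h)) * shift r a" using Gdv[OF h] dvd_trans by blast
    then show ?thesis using coprime_dvd_mult_right_iff[OF cop1] by blast
  qed
  have cop: "coprime (shift p a) (shift q a)" using H coprime_shift unfolding Hyp_def by blast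
  have "is_unit G'" using coprime_common_divisor[OF cop G'dv[OF h1] G'dv[OF h2]] .
  then obtain c1 where c1: "G' = [:c1:]" "is_unit c1" using is_unit_poly_iff by blast
  then obtain k where k: "c1 = [:k:]" "is_unit k" using is_unit_poly_iff by blast
  have k0: "k \<noteq> 0" using k(2) by auto
  let ?K = "[:[:k:]:] :: real poly poly"
  have peK: "peval ?K z = k" for z by simp
  have id2: "Xp ^ D * g = ?K * Xp ^ e"
  proof (rule eq_on_xnz)
    fix x y :: real assume x: "x \<noteq> 0"
    have A: "peval G (x, x * y) = x ^ D * peval g (x,y)" unfolding G_def
      by (rule psi_chart[OF _ x]) (simp add: D_def)
    have "G = Xp ^ e * ?K" using G'(1) c1 k unfolding e_def by simp
    then have "peval G (x, x * y) = peval (Xp ^ e * ?K) (x, x * y)" by simp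
    moreover have "peval (Xp ^ e * ?K) (x, x * y) = x ^ e * k" by simp
    ultimately have "peval G (x, x * y) = x ^ e * k" by simp
    with A show "peval (Xp ^ D * g) (x,y) = peval (?K * Xp ^ e) (x,y)" by (simp add: mult.commute)
  qed
  show False
  proof (cases "e \<le> D")
    case True
    have "Xp ^ e * (Xp ^ (D - e) * g - ?K) = 0"
      using id2 True by (simp add: algebra_simps power_add[symmetric])
    then have "Xp ^ (D - e) * g = ?K" using Xp_nonzero by simp
    then have "peval (Xp ^ (D - e) * g) (0,v0) = k" using peK by metis
    then show False using g(3) k0 by simp
  next
    case False
    have "Xp ^ D * (g - ?K * Xp ^ (e - D)) = 0"
      using id2 False by (simp add: algebra_simps power_add[symmetric])
    then have "g = ?K * Xp ^ (e - D)" using Xp_nonzero by simp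
    then have "Xp dvd g" using False by (metis dvd_mult dvd_power zero_less_diff not_le)
    then have "Xp dvd qt" using g(2) dvd_trans by blast
    then show False using nX by blast
  qed
qed


lemma cont_eq0:
  fixes g h :: "real \<Rightarrow> real"
  assumes "isCont g 0" "isCont h 0" "\<And>u. u \<noteq> 0 \<Longrightarrow> g u = h u"
  shows "g 0 = h 0"
proof -
  have "(g \<longlongrightarrow> g 0) (at 0)" using assms(1) isCont_def by blast
  moreover have ev: "eventually (\<lambda>u. h u = g u) (at 0)"
    unfolding eventually_at using assms(3) by (intro exI[of _ 1]) auto
  have "(h \<longlongrightarrow> h 0) (at 0)" using assms(2) isCont_def by blast
  then have "(g \<longlongrightarrow> h 0) (at 0)" using tendsto_cong[OF ev] by blast
  ultimately show ?thesis using LIM_unique by blast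
qed

lemma near0_right:
  fixes g :: "real \<Rightarrow> real"
  assumes "isCont g 0" "g 0 < 0"
  shows "\<exists>u>0. g u < 0"
proof -
  from assms(1) have "\<forall>r>0. \<exists>s>0. \<forall>x. x \<noteq> 0 \<and> norm (x - 0) < s \<longrightarrow> norm (g x - g 0) < r"
    unfolding isCont_def LIM_eq by blast
  then obtain s where s: "s > 0" "\<forall>x. x \<noteq> 0 \<and> norm (x - 0) < s \<longrightarrow> norm (g x - g 0) < - g 0"
    using assms(2) by (meson neg_0_less_iff_less)
  then have "\<bar>g (s/2) - g 0\<bar> < - g 0" by auto
  then show ?thesis using s(1) by (intro exI[of _ "s/2"]) auto
qed

lemma near0_left:
  fixes g :: "real \<Rightarrow> real"
  assumes "isCont g 0" "g 0 < 0"
  shows "\<exists>u<0. g u < 0"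
proof -
  from assms(1) have "\<forall>r>0. \<exists>s>0. \<forall>x. x \<noteq> 0 \<and> norm (x - 0) < s \<longrightarrow> norm (g x - g 0) < r"
    unfolding isCont_def LIM_eq by blast
  then obtain s where s: "s > 0" "\<forall>x. x \<noteq> 0 \<and> norm (x - 0) < s \<longrightarrow> norm (g x - g 0) < - g 0"
    using assms(2) by (meson neg_0_less_iff_less)
  then have "\<bar>g (-s/2) - g 0\<bar> < - g 0" by auto
  then show ?thesis using s(1) by (intro exI[of _ "-s/2"]) auto
qed

lemma isCont_peval_u: "isCont (\<lambda>u. peval P (u, v)) x"
  by (rule isCont_o2[OF _ peval_isCont]) (intro continuous_intros)

lemma isCont_f_chart:
  assumes "continuous_on UNIV f"
  shows "isCont (\<lambda>u. f (chart1 a (u, v))) x"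
proof (rule isCont_o2[where f="\<lambda>u. chart1 a (u, v)" and g=f])
  show "isCont (\<lambda>u. chart1 a (u, v)) x" unfolding chart1_def by (intro continuous_intros)
  show "isCont f (chart1 a (x, v))" using assms continuous_on_eq_continuous_at by blast
qed

lemma C1_sign:
  assumes H: "Hyp f p q"
    and exp: "\<forall>s t. peval q (fst a + s, snd a + t) = (\<Sum>i<N. \<Sum>j<N. c i j * s ^ i * t ^ j)"
    and cz: "\<forall>i j. N \<le> i \<or> N \<le> j \<longrightarrow> c i j = 0"
    and m1: "\<exists>i\<le>m. c i (m - i) \<noteq> 0" and m2: "\<forall>k<m. \<forall>i\<le>k. c i (k - i) = 0"
    and reg: "\<forall>v0. regular_at (f \<circ> chart1 a) (0, v0)"
  shows "(\<forall>v. Q1 c m v > 0) \<and> even m"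
proof -
  define qt where "qt = tpoly c N m"
  have sq: "sig a q = Xp ^ m * qt" unfolding qt_def by (rule sig_tpoly[OF exp m2])
  have qt0: "\<And>v. peval qt (0,v) = Q1 c m v" unfolding qt_def by (rule tpoly_at0[OF cz])
  have nn: "u ^ m * peval qt (u,v) \<ge> 0" for u v
  proof -
    have "peval (sig a q) (u,v) \<ge> 0" using H unfolding Hyp_def peval_sig by blast
    then show ?thesis using sq by simp
  qed
  have pos: "Q1 c m v > 0" for v
  proof -
    have "Q1 c m v \<noteq> 0" using C1[OF H exp cz m1 m2] reg by blast
    moreover have "\<not> Q1 c m v < 0"
    proof
      assume "Q1 c m v < 0"
      then obtain u where "u > 0" "peval qt (u,v) < 0"
        using near0_right[of "\<lambda>u. peval qt (u,v)"] isCont_peval_u qt0 by auto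
      then have "u ^ m * peval qt (u,v) < 0" by (simp add: mult_pos_neg)
      then show False using nn[of u v] by simp
    qed
    ultimately show ?thesis by simp
  qed
  have "even m"
  proof (rule ccontr)
    assume odd: "odd m"
    obtain u where u: "u < 0" "- peval qt (u,0) < 0"
      using near0_left[of "\<lambda>u. - peval qt (u,0)"] isCont_peval_u[where P=qt and v=0 and x=0] pos[of 0] qt0
      by (auto intro: continuous_intros)
    have "u ^ m < 0" using odd u(1) by simp
    then have "u ^ m * peval qt (u,0) < 0" using u(2) by (simp add: mult_neg_pos)
    then show False using nn[of u 0] by simp
  qed
  then show ?thesis using pos by blast
qed

lemma C2:
  assumes H: "Hyp f p q"
    and expq: "\<forall>s t. peval q (fst a + s, snd a + t) = (\<Sum>i<N. \<Sum>j<N. c i j * s ^ i * t ^ j)"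
    and czq: "\<forall>i j. N \<le> i \<or> N \<le> j \<longrightarrow> c i j = 0"
    and expp: "\<forall>s t. peval p (fst a + s, snd a + t) = (\<Sum>i<N. \<Sum>j<N. d i j * s ^ i * t ^ j)"
    and czp: "\<forall>i j. N \<le> i \<or> N \<le> j \<longrightarrow> d i j = 0"
    and m1: "\<exists>i\<le>m. c i (m - i) \<noteq> 0" and m2: "\<forall>k<m. \<forall>i\<le>k. c i (k - i) = 0"
    and Qv0: "Q1 c m v0 \<noteq> 0"
  shows "regular_at (f \<circ> chart1 a) (0, v0)"
proof -
  have fc: "continuous_on UNIV f" using Hyp_cont[OF H] .
  have fq: "f (chart1 a w) * peval (sig a q) w = peval (sig a p) w" for w
    using Hyp_fq[OF H] by (simp add: peval_sig)
  have dlow: "\<forall>k<m. \<forall>i\<le>k. d i (k - i) = 0"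
  proof (rule ccontr)
    assume "\<not> (\<forall>k<m. \<forall>i\<le>k. d i (k - i) = 0)"
    then have ex: "\<exists>k. k < m \<and> (\<exists>i\<le>k. d i (k - i) \<noteq> 0)" by blast
    define k0 where "k0 = (LEAST k. k < m \<and> (\<exists>i\<le>k. d i (k - i) \<noteq> 0))"
    have k0: "k0 < m" "\<exists>i\<le>k0. d i (k0 - i) \<noteq> 0"
      using LeastI_ex[OF ex] unfolding k0_def by auto
    have k0l: "\<forall>k<k0. \<forall>i\<le>k. d i (k - i) = 0"
    proof (intro allI impI)
      fix k i assume "k < k0" "i \<le> k"
      then have "\<not> (k < m \<and> (\<exists>i\<le>k. d i (k - i) \<noteq> 0))"
        using not_less_Least[of k "\<lambda>k. k < m \<and> (\<exists>i\<le>k. d i (k - i) \<noteq> 0)"] unfolding k0_def by blast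
      then show "d i (k - i) = 0" using \<open>k < k0\<close> k0(1) \<open>i \<le> k\<close> by auto
    qed
    define pt where "pt = tpoly d N k0"
    define qt where "qt = tpoly c N m"
    have sp: "sig a p = Xp ^ k0 * pt" unfolding pt_def by (rule sig_tpoly[OF expp k0l])
    have sq: "sig a q = Xp ^ m * qt" unfolding qt_def by (rule sig_tpoly[OF expq m2])
    have pt0: "\<And>v. peval pt (0,v) = Q1 d k0 v" unfolding pt_def by (rule tpoly_at0[OF czp])
    obtain v1 where v1: "Q1 d k0 v1 \<noteq> 0" using Q1_nonzero[of k0 d, OF k0(2)] by blast
    have "(\<lambda>u. f (chart1 a (u, v1)) * u ^ (m - k0) * peval qt (u, v1)) 0 = (\<lambda>u. peval pt (u, v1)) 0"
    proof (rule cont_eq0)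
      show "isCont (\<lambda>u. f (chart1 a (u, v1)) * u ^ (m - k0) * peval qt (u, v1)) 0"
        by (intro continuous_intros isCont_f_chart[OF fc] isCont_peval_u)
      show "isCont (\<lambda>u. peval pt (u, v1)) 0" by (rule isCont_peval_u)
      fix u :: real assume u: "u \<noteq> 0"
      have "f (chart1 a (u,v1)) * (u ^ m * peval qt (u,v1)) = u ^ k0 * peval pt (u,v1)"
        using fq[of "(u,v1)"] sp sq by simp
      moreover have "u ^ m = u ^ k0 * u ^ (m - k0)" using k0(1) by (simp add: power_add[symmetric])
      ultimately show "f (chart1 a (u, v1)) * u ^ (m - k0) * peval qt (u, v1) = peval pt (u, v1)"
        using u by (simp add: algebra_simps)
    qed
    moreover have "(0::real) ^ (m - k0) = 0" using k0(1) by (simp add: zero_power)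
    ultimately show False using pt0 v1 by simp
  qed
  define P where "P = tpoly d N m"
  define Q where "Q = tpoly c N m"
  have sp: "sig a p = Xp ^ m * P" unfolding P_def by (rule sig_tpoly[OF expp dlow])
  have sq: "sig a q = Xp ^ m * Q" unfolding Q_def by (rule sig_tpoly[OF expq m2])
  have Q0: "peval Q (0,v0) \<noteq> 0" using Qv0 tpoly_at0[OF czq] unfolding Q_def by simp
  have all: "f (chart1 a (u,v)) * peval Q (u,v) = peval P (u,v)" for u v
  proof -
    have "(\<lambda>u. f (chart1 a (u, v)) * peval Q (u, v)) u = (\<lambda>u. peval P (u, v)) u"
    proof (cases "u = 0")
      case False
      have "f (chart1 a (u,v)) * (u ^ m * peval Q (u,v)) = u ^ m * peval P (u,v)"
        using fq[of "(u,v)"] sp sq by simp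
      then show ?thesis using False by simp
    next
      case True
      have "(\<lambda>u. f (chart1 a (u, v)) * peval Q (u, v)) 0 = (\<lambda>u. peval P (u, v)) 0"
      proof (rule cont_eq0)
        show "isCont (\<lambda>u. f (chart1 a (u, v)) * peval Q (u, v)) 0"
          by (intro continuous_intros isCont_f_chart[OF fc] isCont_peval_u)
        show "isCont (\<lambda>u. peval P (u, v)) 0" by (rule isCont_peval_u)
        fix u :: real assume u: "u \<noteq> 0"
        have "f (chart1 a (u,v)) * (u ^ m * peval Q (u,v)) = u ^ m * peval P (u,v)"
          using fq[of "(u,v)"] sp sq by simp
        then show "f (chart1 a (u, v)) * peval Q (u, v) = peval P (u, v)" using u by simp
      qed
      then show ?thesis using True by simp
    qed
    then show ?thesis by simp
  qed
  show ?thesis unfolding regular_at_def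
  proof (intro exI conjI allI impI)
    show "peval Q (0,v0) \<noteq> 0" by (rule Q0)
    fix w :: "real \<times> real" assume "peval Q w \<noteq> 0"
    then show "(f \<circ> chart1 a) w = peval P w / peval Q w"
      using all[of "fst w" "snd w"] by (simp add: field_simps)
  qed
qed


definition swp :: "real poly poly \<Rightarrow> real poly poly" where
  "swp P = (\<Sum>i<Suc (bnd P). \<Sum>j<Suc (bnd P). monom (monom (coeff (coeff P j) i) j) i)"

lemma peval_swp: "peval (swp P) z = peval P (prod.swap z)"
proof -
  obtain x y where z: "z = (x,y)" by (cases z)
  have "peval (swp P) z = (\<Sum>i<Suc (bnd P). \<Sum>j<Suc (bnd P). coeff (coeff P j) i * y ^ i * x ^ j)"
    by (simp add: swp_def z poly_monom mult_ac)
  also have "\<dots> = peval P (y,x)" by (rule peval_expand[symmetric]) simp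
  finally show ?thesis by (simp add: z)
qed

lemma swp_mult: "swp (A * B) = swp A * swp B"
  by (rule poly_eq_peval) (simp add: peval_swp)
lemma swp_swp: "swp (swp A) = A"
  by (rule poly_eq_peval) (simp add: peval_swp)
lemma swp_1: "swp 1 = 1"
  by (rule poly_eq_peval) (simp add: peval_swp)

lemma coprime_swp: "coprime p q \<Longrightarrow> coprime (swp p) (swp q)"
  by (rule coprime_transfer[where \<psi>=swp]) (auto simp: swp_mult swp_swp swp_1)

lemma zariski_swap: "zariski_open U \<Longrightarrow> zariski_open (prod.swap ` U)"
proof -
  assume "zariski_open U"
  then obtain S where U: "U = {z. \<exists>P\<in>S. peval P z \<noteq> 0}" unfolding zariski_open_def by blast
  have "prod.swap ` U = {z. \<exists>P\<in>swp ` S. peval P z \<noteq> 0}"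
  proof (intro set_eqI iffI)
    fix z assume "z \<in> prod.swap ` U"
    then obtain w where "z = prod.swap w" "w \<in> U" by blast
    then show "z \<in> {z. \<exists>P\<in>swp ` S. peval P z \<noteq> 0}" using U by (auto simp: peval_swp)
  next
    fix z assume "z \<in> {z. \<exists>P\<in>swp ` S. peval P z \<noteq> 0}"
    then have "prod.swap z \<in> U" using U by (auto simp: peval_swp)
    then show "z \<in> prod.swap ` U" by (metis image_eqI swap_swap)
  qed
  then show ?thesis unfolding zariski_open_def by blast
qed

lemma rat_regular_swap: "rat_regular_at f z \<Longrightarrow> rat_regular_at (f \<circ> prod.swap) (prod.swap z)"
proof -
  assume "rat_regular_at f z"
  then obtain P Q U where U: "zariski_open U" "U \<noteq> {}" "peval Q z \<noteq> 0"
      "\<forall>w\<in>U. peval Q w \<noteq> 0 \<and> f w = peval P w / peval Q w"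
    unfolding rat_regular_at_def by blast
  show ?thesis unfolding rat_regular_at_def
  proof (intro exI conjI)
    show "zariski_open (prod.swap ` U)" by (rule zariski_swap[OF U(1)])
    show "prod.swap ` U \<noteq> {}" using U(2) by blast
    show "peval (swp Q) (prod.swap z) \<noteq> 0" using U(3) by (simp add: peval_swp)
    show "\<forall>w\<in>prod.swap ` U. peval (swp Q) w \<noteq> 0 \<and> (f \<circ> prod.swap) w = peval (swp P) w / peval (swp Q) w"
      using U(4) by (auto simp: peval_swp)
  qed
qed

lemma rdom_swap: "z \<in> rdom (f \<circ> prod.swap) \<Longrightarrow> prod.swap z \<in> rdom f"
proof -
  assume "z \<in> rdom (f \<circ> prod.swap)"
  then have "rat_regular_at ((f \<circ> prod.swap) \<circ> prod.swap) (prod.swap z)"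
    unfolding rdom_def using rat_regular_swap by blast
  moreover have "(f \<circ> prod.swap) \<circ> prod.swap = f" by (auto simp: fun_eq_iff)
  ultimately show ?thesis unfolding rdom_def by simp
qed

lemma regular_at_swap: "regular_at g z \<Longrightarrow> regular_at (g \<circ> prod.swap) (prod.swap z)"
proof -
  assume "regular_at g z"
  then obtain P Q where PQ: "peval Q z \<noteq> 0" "\<forall>w. peval Q w \<noteq> 0 \<longrightarrow> g w = peval P w / peval Q w"
    unfolding regular_at_def by blast
  show ?thesis unfolding regular_at_def
    by (rule exI[of _ "swp P"], rule exI[of _ "swp Q"]) (use PQ in \<open>auto simp: peval_swp\<close>)
qed

lemma Hyp_swap: "Hyp f p q \<Longrightarrow> Hyp (f \<circ> prod.swap) (swp p) (swp q)"
proof -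
  assume H: "Hyp f p q"
  have reg: "regulous (f \<circ> prod.swap)"
  proof -
    from H have "regulous f" unfolding Hyp_def by blast
    then obtain U P Q where U: "continuous_on UNIV f" "zariski_open U" "U \<noteq> {}"
        "\<forall>z\<in>U. peval Q z \<noteq> 0 \<and> f z = peval P z / peval Q z" unfolding regulous_def by blast
    have "continuous_on UNIV (f \<circ> prod.swap)"
      by (rule continuous_on_compose) (auto intro: continuous_intros continuous_on_subset[OF U(1)])
    moreover have "zariski_open (prod.swap ` U)" by (rule zariski_swap[OF U(2)])
    moreover have "prod.swap ` U \<noteq> {}" using U(3) by blast
    moreover have "\<forall>z\<in>prod.swap ` U. peval (swp Q) z \<noteq> 0 \<and> (f \<circ> prod.swap) z = peval (swp P) z / peval (swp Q) z"
      using U(4) by (auto simp: peval_swp)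
    ultimately show ?thesis unfolding regulous_def by blast
  qed
  show ?thesis unfolding Hyp_def
  proof (intro conjI ballI allI)
    show "regulous (f \<circ> prod.swap)" by (rule reg)
    show "coprime (swp p) (swp q)" using H coprime_swp unfolding Hyp_def by blast
    fix z show "peval (swp q) z \<ge> 0" using H unfolding Hyp_def peval_swp by blast
  next
    fix z assume "z \<in> rdom (f \<circ> prod.swap)"
    then have "prod.swap z \<in> rdom f" by (rule rdom_swap)
    then show "peval (swp q) z \<noteq> 0" "(f \<circ> prod.swap) z = peval (swp p) z / peval (swp q) z"
      using H unfolding Hyp_def by (auto simp: peval_swp)
  qed
qed

lemma chart_swap: "(f \<circ> prod.swap) \<circ> chart1 (prod.swap a) = (f \<circ> chart2 a) \<circ> prod.swap"
  by (auto simp: fun_eq_iff chart1_def chart2_def mult.commute)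

lemma field_bezout:
  fixes P Q :: "'k::field poly"
  shows "\<exists>A B. (A * P + B * Q) dvd P \<and> (A * P + B * Q) dvd Q"
proof (induction Q arbitrary: P rule: measure_induct_rule[where f="\<lambda>Q. if Q = 0 then 0 else Suc (degree Q)"])
  case (less Q)
  show ?case
  proof (cases "Q = 0")
    case True then show ?thesis by (intro exI[of _ 1] exI[of _ 0]) auto
  next
    case False
    define R where "R = P mod Q"
    have "(if R = 0 then 0 else Suc (degree R)) < (if Q = 0 then 0 else Suc (degree Q))"
      using degree_mod_less[OF False, of P] False unfolding R_def by auto
    then obtain A B where AB: "(A * Q + B * R) dvd Q" "(A * Q + B * R) dvd R" using less by blast
    have PQ: "P = (P div Q) * Q + R" unfolding R_def by simp
    have eq: "A * Q + B * R = B * P + (A - B * (P div Q)) * Q"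
      by (subst PQ) (simp add: algebra_simps)
    have "(A * Q + B * R) dvd P" using AB by (subst PQ) (simp add: dvd_add)
    then show ?thesis using AB eq by metis
  qed
qed

lemma clear_denoms:
  fixes X :: "real poly fract poly"
  shows "\<exists>n X'. n \<noteq> 0 \<and> smult (to_fract n) X = map_poly to_fract X'"
proof -
  obtain k X0 where X: "X = smult k (map_poly to_fract X0)" by (rule content_decompose_fract)
  obtain a b where ab: "k = Fract a b" "b \<noteq> 0" by (cases k)
  have "smult (to_fract b) X = map_poly to_fract (smult a X0)"
    using ab by (simp add: X Fract_conv_to_fract)
  then show ?thesis using ab(2) by blast
qed

lemma bezout_rpp:
  fixes p q :: "real poly poly"
  assumes cop: "coprime p q"
  shows "\<exists>A B c. c \<noteq> 0 \<and> A * p + B * q = [:c:]"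
proof -
  let ?fp = "map_poly to_fract p" and ?fq = "map_poly to_fract q"
  obtain A B where AB: "(A * ?fp + B * ?fq) dvd ?fp" "(A * ?fp + B * ?fq) dvd ?fq"
    using field_bezout by blast
  define d where "d = A * ?fp + B * ?fq"
  have dnz: "d \<noteq> 0"
  proof
    assume "d = 0"
    then have "?fp = 0" "?fq = 0" using AB unfolding d_def by auto
    then have "p = 0" "q = 0" by auto
    then show False using cop by simp
  qed
  obtain k d' where dd: "d = smult k (map_poly to_fract d')" "content d' = 1"
    by (rule content_decompose_fract)
  have k0: "k \<noteq> 0" using dnz dd by auto
  have fd: "map_poly to_fract d' dvd d" unfolding dd by (simp add: dvd_smult)
  have "d' dvd p" by (rule fract_poly_dvdD[OF _ dd(2)]) (use fd AB d_def dvd_trans in blast)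
  moreover have "d' dvd q" by (rule fract_poly_dvdD[OF _ dd(2)]) (use fd AB d_def dvd_trans in blast)
  ultimately have "is_unit d'" using coprime_common_divisor[OF cop] by blast
  then have "is_unit (map_poly to_fract d')" by (rule fract_poly_is_unit)
  then have "is_unit d" unfolding dd using k0 by (simp add: is_unit_smult_iff dvd_field_iff)
  then obtain w where w: "1 = d * w" by blast
  obtain n1 X1 where X1: "n1 \<noteq> 0" "smult (to_fract n1) (w * A) = map_poly to_fract X1"
    using clear_denoms by blast
  obtain n2 X2 where X2: "n2 \<noteq> 0" "smult (to_fract n2) (w * B) = map_poly to_fract X2"
    using clear_denoms by blast
  have "map_poly to_fract (smult n2 X1 * p + smult n1 X2 * q)
      = smult (to_fract n2) (smult (to_fract n1) (w * A)) * ?fp + smult (to_fract n1) (smult (to_fract n2) (w * B)) * ?fq"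
    by (simp add: X1 X2)
  also have "\<dots> = smult (to_fract (n1 * n2)) (w * d)"
    unfolding d_def by (simp add: algebra_simps smult_add_right)
  also have "\<dots> = map_poly to_fract [:n1 * n2:]" using w by (simp add: mult.commute map_poly_pCons)
  finally have "smult n2 X1 * p + smult n1 X2 * q = [:n1 * n2:]" by (simp only: fract_poly_eq_iff)
  then show ?thesis using X1(1) X2(1) by (intro exI[of _ "smult n2 X1"] exI[of _ "smult n1 X2"] exI[of _ "n1 * n2"]) simp
qed

lemma finite_zeros:
  assumes H: "Hyp f p q"
  shows "finite {z. peval q z = 0}"
proof -
  have cop: "coprime p q" using H unfolding Hyp_def by blast
  obtain A1 B1 c1 where c1: "c1 \<noteq> 0" "A1 * p + B1 * q = [:c1:]" using bezout_rpp[OF cop] by blast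
  obtain A2 B2 c2 where c2: "c2 \<noteq> 0" "A2 * swp p + B2 * swp q = [:c2:]"
    using bezout_rpp[OF coprime_swp[OF cop]] by blast
  have "{z. peval q z = 0} \<subseteq> {x. poly c1 x = 0} \<times> {y. poly c2 y = 0}"
  proof
    fix z assume z: "z \<in> {z. peval q z = 0}"
    obtain x y where zz: "z = (x,y)" by (cases z)
    have qz: "peval q (x,y) = 0" using z zz by simp
    have pz: "peval p (x,y) = 0" using Hyp_fq[OF H, of "(x,y)"] qz by simp
    have "peval (A1 * p + B1 * q) (x,y) = poly c1 x" using c1(2) by simp
    then have "poly c1 x = 0" using pz qz by simp
    moreover have "peval (A2 * swp p + B2 * swp q) (y,x) = poly c2 y" using c2(2) by simp
    then have "poly c2 y = 0" using pz qz by (simp add: peval_swp)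
    ultimately show "z \<in> {x. poly c1 x = 0} \<times> {y. poly c2 y = 0}" using zz by simp
  qed
  moreover have "finite ({x. poly c1 x = 0} \<times> {y. poly c2 y = 0})"
    using poly_roots_finite[OF c1(1)] poly_roots_finite[OF c2(1)] by simp
  ultimately show ?thesis using finite_subset by blast
qed


lemma regular_imp_rdom: "regular_at f z \<Longrightarrow> z \<in> rdom f"
proof -
  assume "regular_at f z"
  then obtain P Q where PQ: "peval Q z \<noteq> 0" "\<forall>w. peval Q w \<noteq> 0 \<longrightarrow> f w = peval P w / peval Q w"
    unfolding regular_at_def by blast
  show ?thesis unfolding rdom_def rat_regular_at_def mem_Collect_eq
  proof (intro exI conjI)
    show "zariski_open {w. peval Q w \<noteq> 0}" by (rule zariski_open_single)
    show "{w. peval Q w \<noteq> 0} \<noteq> {}" using PQ(1) by blast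
  qed (use PQ in auto)
qed

lemma tcoeff_expand:
  assumes "bnd (shift P a) < N"
  shows "peval P (fst a + s, snd a + t) = (\<Sum>i<N. \<Sum>j<N. tcoeff P a i j * s ^ i * t ^ j)"
  unfolding tcoeff_def using peval_expand[OF assms, of s t] by (simp add: peval_shift)

lemma tcoeff_zero:
  assumes "bnd (shift P a) < N" "N \<le> i \<or> N \<le> j"
  shows "tcoeff P a i j = 0"
  unfolding tcoeff_def using assms by (intro bnd_coeff_zero) auto

lemma swap_expand:
  assumes "\<forall>s t. peval q (fst a + s, snd a + t) = (\<Sum>i<N. \<Sum>j<N. c i j * s ^ i * t ^ j)"
  shows "\<forall>s t. peval (swp q) (fst (prod.swap a) + s, snd (prod.swap a) + t)
           = (\<Sum>i<N. \<Sum>j<N. c j i * s ^ i * t ^ j)"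
proof (intro allI)
  fix s t :: real
  have "peval (swp q) (fst (prod.swap a) + s, snd (prod.swap a) + t) = peval q (fst a + t, snd a + s)"
    by (simp add: peval_swp)
  also have "\<dots> = (\<Sum>i<N. \<Sum>j<N. c i j * t ^ i * s ^ j)" using assms by blast
  also have "\<dots> = (\<Sum>j<N. \<Sum>i<N. c i j * t ^ i * s ^ j)" by (rule sum.swap)
  also have "\<dots> = (\<Sum>i<N. \<Sum>j<N. c j i * s ^ i * t ^ j)" by (simp add: mult_ac)
  finally show "peval (swp q) (fst (prod.swap a) + s, snd (prod.swap a) + t)
           = (\<Sum>i<N. \<Sum>j<N. c j i * s ^ i * t ^ j)" .
qed

lemma Q1_zero: "Q1 c m 0 = c m 0"
proof -
  have "Q1 c m 0 = (\<Sum>i\<le>m. if i = m then c m 0 else 0)"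
    unfolding Q1_def by (intro sum.cong refl) (auto simp: zero_power)
  then show ?thesis by simp
qed

lemma Q1_swap: "Q1 (\<lambda>i j. c j i) m u = (\<Sum>i\<le>m. c i (m - i) * u ^ i)"
proof -
  have "Q1 (\<lambda>i j. c j i) m u = (\<Sum>i\<le>m. c (m - i) i * u ^ (m - i))" unfolding Q1_def by simp
  also have "\<dots> = (\<Sum>i\<le>m. c (m - (m - i)) (m - i) * u ^ (m - (m - i)))" by (rule sum_atMost_rev)
  also have "\<dots> = (\<Sum>i\<le>m. c i (m - i) * u ^ i)" by (intro sum.cong refl) auto
  finally show ?thesis .
qed

lemma homog_alt: "homog_comp P a m w = (\<Sum>i\<le>m. tcoeff P a i (m - i) * (fst w - fst a) ^ i * (snd w - snd a) ^ (m - i))"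
  unfolding homog_comp_def by simp

lemma homog_Q1:
  assumes "s \<noteq> 0"
  shows "homog_comp P a m (fst a + s, snd a + t) = s ^ m * Q1 (tcoeff P a) m (t / s)"
proof -
  have "homog_comp P a m (fst a + s, snd a + t) = (\<Sum>i\<le>m. tcoeff P a i (m - i) * s ^ i * t ^ (m - i))"
    unfolding homog_comp_def by simp
  also have "\<dots> = (\<Sum>i\<le>m. s ^ m * (tcoeff P a i (m - i) * (t / s) ^ (m - i)))"
  proof (intro sum.cong refl)
    fix i assume "i \<in> {..m}"
    then have "s ^ m = s ^ i * s ^ (m - i)" by (simp add: power_add[symmetric])
    then show "tcoeff P a i (m - i) * s ^ i * t ^ (m - i) = s ^ m * (tcoeff P a i (m - i) * (t / s) ^ (m - i))"
      using assms by (simp add: power_divide field_simps)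
  qed
  also have "\<dots> = s ^ m * Q1 (tcoeff P a) m (t / s)" unfolding Q1_def by (simp add: sum_distrib_left)
  finally show ?thesis .
qed

lemma homog_s0: "homog_comp P a m (fst a, snd a + t) = tcoeff P a 0 m * t ^ m"
proof -
  have "homog_comp P a m (fst a, snd a + t) = (\<Sum>i\<le>m. if i = 0 then tcoeff P a 0 m * t ^ m else 0)"
    unfolding homog_comp_def by (intro sum.cong refl) (auto simp: zero_power)
  then show ?thesis by simp
qed

theorem theorem3p2:
  fixes f :: "real \<times> real \<Rightarrow> real" and p q :: "real poly poly"
  assumes "regulous f"
    and "coprime p q"
    and "\<forall>z. peval q z \<ge> 0"
    and "\<forall>z\<in>rdom f. peval q z \<noteq> 0"
    and "\<forall>z\<in>rdom f. f z = peval p z / peval q z"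
  shows "f \<in> R0_1 \<longleftrightarrow> (\<forall>a\<in>pol f. loc_pos_def q a)"
proof -
  have H: "Hyp f p q" unfolding Hyp_def using assms by blast
  have H': "Hyp (f \<circ> prod.swap) (swp p) (swp q)" by (rule Hyp_swap[OF H])
  have qnz: "q \<noteq> 0" by (rule Hyp_q_nonzero[OF H])
  have polq: "a \<in> pol f \<longleftrightarrow> peval q a = 0" for a
    unfolding pol_def using Hyp_rdom[OF H] by auto
  define NN where "NN a = Suc (max (bnd (shift q a)) (bnd (shift p a)))" for a
  have expq: "\<forall>s t. peval q (fst a + s, snd a + t) = (\<Sum>i<NN a. \<Sum>j<NN a. tcoeff q a i j * s ^ i * t ^ j)" for a
    by (intro allI tcoeff_expand) (simp add: NN_def)
  have expp: "\<forall>s t. peval p (fst a + s, snd a + t) = (\<Sum>i<NN a. \<Sum>j<NN a. tcoeff p a i j * s ^ i * t ^ j)" for a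
    by (intro allI tcoeff_expand) (simp add: NN_def)
  have czq: "\<forall>i j. NN a \<le> i \<or> NN a \<le> j \<longrightarrow> tcoeff q a i j = 0" for a
    by (intro allI impI tcoeff_zero) (auto simp: NN_def)
  have czp: "\<forall>i j. NN a \<le> i \<or> NN a \<le> j \<longrightarrow> tcoeff p a i j = 0" for a
    by (intro allI impI tcoeff_zero) (auto simp: NN_def)
  have czq': "\<forall>i j. NN a \<le> i \<or> NN a \<le> j \<longrightarrow> (\<lambda>i j. tcoeff q a j i) i j = 0" for a
    using czq by blast
  have czp': "\<forall>i j. NN a \<le> i \<or> NN a \<le> j \<longrightarrow> (\<lambda>i j. tcoeff p a j i) i j = 0" for a
    using czp by blast
  have expq': "\<forall>s t. peval (swp q) (fst (prod.swap a) + s, snd (prod.swap a) + t)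
           = (\<Sum>i<NN a. \<Sum>j<NN a. (\<lambda>i j. tcoeff q a j i) i j * s ^ i * t ^ j)" for a
    using swap_expand[OF expq] by simp
  have expp': "\<forall>s t. peval (swp p) (fst (prod.swap a) + s, snd (prod.swap a) + t)
           = (\<Sum>i<NN a. \<Sum>j<NN a. (\<lambda>i j. tcoeff p a j i) i j * s ^ i * t ^ j)" for a
    using swap_expand[OF expp] by simp
  have sw1: "\<exists>i\<le>m. (\<lambda>i j. tcoeff q a j i) i (m - i) \<noteq> 0" if "\<exists>i\<le>m. tcoeff q a i (m - i) \<noteq> 0" for a m
  proof -
    from that obtain i where "i \<le> m" "tcoeff q a i (m - i) \<noteq> 0" by blast
    then show ?thesis by (intro exI[of _ "m - i"]) auto
  qed
  have sw2: "\<forall>k<m. \<forall>i\<le>k. (\<lambda>i j. tcoeff q a j i) i (k - i) = 0" if "\<forall>k<m. \<forall>i\<le>k. tcoeff q a i (k - i) = 0" for a m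
  proof (intro allI impI)
    fix k i assume "k < m" "i \<le> k"
    moreover have "k - i \<le> k" by simp
    ultimately have "tcoeff q a (k - i) (k - (k - i)) = 0" using that by blast
    then show "(\<lambda>i j. tcoeff q a j i) i (k - i) = 0" using \<open>i \<le> k\<close> by simp
  qed
  have chart2_reg: "regular_at (f \<circ> chart2 a) (u, 0)"
    if "regular_at ((f \<circ> prod.swap) \<circ> chart1 (prod.swap a)) (0, u)" for a u
  proof -
    have "regular_at ((f \<circ> chart2 a) \<circ> prod.swap) (0, u)" using that chart_swap by metis
    then have "regular_at (((f \<circ> chart2 a) \<circ> prod.swap) \<circ> prod.swap) (prod.swap (0, u))"
      by (rule regular_at_swap)
    moreover have "((f \<circ> chart2 a) \<circ> prod.swap) \<circ> prod.swap = f \<circ> chart2 a" by (auto simp: fun_eq_iff)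
    ultimately show ?thesis by simp
  qed
  have chart1_reg': "regular_at ((f \<circ> prod.swap) \<circ> chart1 (prod.swap a)) (0, u)"
    if "regular_at (f \<circ> chart2 a) (u, 0)" for a u
  proof -
    have "regular_at ((f \<circ> chart2 a) \<circ> prod.swap) (prod.swap (u, 0))"
      by (rule regular_at_swap[OF that])
    then show ?thesis using chart_swap by (metis swap_simp)
  qed
  show ?thesis
  proof
    assume "f \<in> R0_1"
    then obtain S where S: "regular_after_blowup S f" unfolding R0_1_def by blast
    show "\<forall>a\<in>pol f. loc_pos_def q a"
    proof
      fix a assume apol: "a \<in> pol f"
      then have qa: "peval q a = 0" using polq by blast
      have aS: "a \<in> S"
      proof (rule ccontr)
        assume "a \<notin> S"
        then have "regular_at f a" using S unfolding regular_after_blowup_def by blast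
        then have "a \<in> rdom f" by (rule regular_imp_rdom)
        then show False using apol unfolding pol_def by blast
      qed
      have reg1: "\<forall>v. regular_at (f \<circ> chart1 a) (0, v)" using S aS unfolding regular_after_blowup_def by blast
      have reg2: "\<forall>v. regular_at ((f \<circ> prod.swap) \<circ> chart1 (prod.swap a)) (0, v)"
        using S aS chart1_reg' unfolding regular_after_blowup_def by blast
      let ?c = "tcoeff q a"
      have exnz: "\<exists>r. \<exists>i\<le>r. ?c i (r - i) \<noteq> 0"
      proof (rule ccontr)
        assume "\<not> (\<exists>r. \<exists>i\<le>r. ?c i (r - i) \<noteq> 0)"
        then have allz: "?c i j = 0" for i j
          using spec[of _ "i + j"] by (metis add_diff_cancel_left' le_add1)
        have "q = 0"
        proof (rule poly_eq_peval)
          fix z :: "real \<times> real"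
          have "\<forall>s t. peval q (fst a + s, snd a + t) = 0" using expq[of a] allz by simp
          then have "peval q (fst a + (fst z - fst a), snd a + (snd z - snd a)) = 0" by blast
          then show "peval q z = peval 0 z" by simp
        qed
        then show False using qnz by simp
      qed
      define m where "m = (LEAST r. \<exists>i\<le>r. ?c i (r - i) \<noteq> 0)"
      have m1: "\<exists>i\<le>m. ?c i (m - i) \<noteq> 0" unfolding m_def by (rule LeastI_ex[OF exnz])
      have m2: "\<forall>k<m. \<forall>i\<le>k. ?c i (k - i) = 0"
        using not_less_Least[of _ "\<lambda>r. \<exists>i\<le>r. ?c i (r - i) \<noteq> 0"] unfolding m_def by blast
      have s1: "(\<forall>v. Q1 ?c m v > 0) \<and> even m"
        by (rule C1_sign[OF H expq[of a] czq[of a] m1 m2 reg1])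
      have s2: "(\<forall>v. Q1 (\<lambda>i j. ?c j i) m v > 0) \<and> even m"
        by (rule C1_sign[OF H' expq'[of a] czq'[of a] sw1[OF m1] sw2[OF m2] reg2])
      have c0m: "?c 0 m > 0" using s2 Q1_zero[of "\<lambda>i j. ?c j i" m] by metis
      have hpos: "\<forall>w. w \<noteq> a \<longrightarrow> homog_comp q a m w > 0"
      proof (intro allI impI)
        fix w assume wa: "w \<noteq> a"
        define s where "s = fst w - fst a"
        define t where "t = snd w - snd a"
        have w: "w = (fst a + s, snd a + t)" unfolding s_def t_def by simp
        show "homog_comp q a m w > 0"
        proof (cases "s = 0")
          case False
          have "s ^ m > 0" using s1 False by (simp add: zero_less_power_eq)
          moreover have "Q1 ?c m (t / s) > 0" using s1 by blast
          ultimately show ?thesis using homog_Q1[OF False, of q a m t] w by simp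
        next
          case True
          then have "t \<noteq> 0" using wa w by (cases a) auto
          then have "t ^ m > 0" using s1 by (simp add: zero_less_power_eq)
          then show ?thesis using homog_s0[of q a m t] w True c0m by simp
        qed
      qed
      show "loc_pos_def q a" unfolding loc_pos_def_def using m1 m2 hpos by blast
    qed
  next
    assume lp: "\<forall>a\<in>pol f. loc_pos_def q a"
    define S where "S = {z. peval q z = 0}"
    have "regular_after_blowup S f" unfolding regular_after_blowup_def
    proof (intro conjI allI impI ballI)
      show "finite S" unfolding S_def by (rule finite_zeros[OF H])
    next
      fix z assume "z \<notin> S"
      then have "peval q z \<noteq> 0" unfolding S_def by simp
      then show "regular_at f z" unfolding regular_at_def
        using Hyp_f_eq[OF H] by blast
    next
      fix a v assume "a \<in> S"
      then have "loc_pos_def q a" using lp polq unfolding S_def by blast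
      then obtain m where m1: "\<exists>i\<le>m. tcoeff q a i (m - i) \<noteq> 0"
          and m2: "\<forall>k<m. \<forall>i\<le>k. tcoeff q a i (k - i) = 0"
          and hp: "\<forall>w. w \<noteq> a \<longrightarrow> homog_comp q a m w > 0"
        unfolding loc_pos_def_def by blast
      have Qv: "Q1 (tcoeff q a) m v \<noteq> 0"
      proof -
        have "(fst a + 1, snd a + v) \<noteq> a" by (cases a) auto
        then have "homog_comp q a m (fst a + 1, snd a + v) > 0" using hp by blast
        then show ?thesis using homog_Q1[of 1 q a m v] by simp
      qed
      show "regular_at (f \<circ> chart1 a) (0, v)"
        by (rule C2[OF H expq[of a] czq[of a] expp[of a] czp[of a] m1 m2 Qv])
    next
      fix a u assume "a \<in> S"
      then have "loc_pos_def q a" using lp polq unfolding S_def by blast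
      then obtain m where m1: "\<exists>i\<le>m. tcoeff q a i (m - i) \<noteq> 0"
          and m2: "\<forall>k<m. \<forall>i\<le>k. tcoeff q a i (k - i) = 0"
          and hp: "\<forall>w. w \<noteq> a \<longrightarrow> homog_comp q a m w > 0"
        unfolding loc_pos_def_def by blast
      have Qv: "Q1 (\<lambda>i j. tcoeff q a j i) m u \<noteq> 0"
      proof -
        have "(fst a + u, snd a + 1) \<noteq> a" by (cases a) auto
        then have "homog_comp q a m (fst a + u, snd a + 1) > 0" using hp by blast
        moreover have "homog_comp q a m (fst a + u, snd a + 1) = (\<Sum>i\<le>m. tcoeff q a i (m - i) * u ^ i)"
          unfolding homog_comp_def by simp
        ultimately show ?thesis using Q1_swap[of "tcoeff q a" m u] by simp
      qed
      have "regular_at ((f \<circ> prod.swap) \<circ> chart1 (prod.swap a)) (0, u)"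
        by (rule C2[OF H' expq'[of a] czq'[of a] expp'[of a] czp'[of a] sw1[OF m1] sw2[OF m2] Qv])
      then show "regular_at (f \<circ> chart2 a) (u, 0)" by (rule chart2_reg)
    qed
    then show "f \<in> R0_1" unfolding R0_1_def using assms(1) by blast
  qed
qed

end
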